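(* Let $\Delta'$, $\Delta''$ be edges (1-cells) of $\tilde K_b(\mathcal P,w)$. Then $\Delta'$ and $\Delta''$ are simple square equivalent if and only if either there is a maximal shaded transistor $T$ of $\Delta'$ such that $\Delta''$ is obtained from $\Delta'$ by removing $T$ and all of its bottom wires, or the same holds with the roles of $\Delta'$ and $\Delta''$ exchanged.
   Context: $\mathcal P=\langle\Sigma\mid\mathcal R\rangle$ is a semigroup presentation (no relation $(u,u)$), $w\in\Sigma^+$. Pictures over $\mathcal P$: frame, transistors and $\Sigma$-labelled wires, each wire from the bottom of a transistor or top of the frame to the top of a transistor or bottom of the frame, contacts ordered left to right, "$T_1<T_2$ if a wire runs from the bottom of $T_1$ to the top of $T_2$" generating a strict partial order, and each transistor's top/bottom words forming a relation of $\mathcal R$. Reduced: no dipole (pair $T_1<T_2$ with bottom contacts of $T_1$ joined in order to top contacts of $T_2$ and top label of $T_1$ = bottom label of $T_2$). $\tilde K_b(\mathcal P,w)$: vertices are reduced $(w,* )$-pictures modulo concatenation below by transistor-free pictures; an $n$-cube is such a picture with $n$ maximal transistors marked white (the other transistors are called shaded), its vertices obtained by keeping or deleting each white transistor together with its bottom wires; cubes glued along faces with equal labels. Thus an edge is a picture with exactly one white transistor. Two edges are simple square equivalent if they are opposite sides of a square (2-cube). *)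

theory Defs
  imports Main
begin

definition semigroup_presentation :: "('a list \<times> 'a list) set \<Rightarrow> bool" where
  "semigroup_presentation R \<longleftrightarrow> (\<forall>(u,v)\<in>R. u \<noteq> [] \<and> v \<noteq> [] \<and> u \<noteq> v)"

text \<open>Wire start points: top-frame contact i, or bottom contact j of transistor t.
Wire end points: top contact j of transistor t, or bottom-frame contact i.
Contacts are numbered from left to right starting at 0.\<close>
datatype src = FTop nat | TBot nat nat
datatype tgt = TTop nat nat | FBot nat

record 'a picture =
  ptop  :: "'a list"            \<comment> \<open>label of the top of the frame\<close>
  pbot  :: "'a list"            \<comment> \<open>label of the bottom of the frame\<close>
  trs   :: "nat set"
  trtop :: "nat \<Rightarrow> 'a list"
  trbot :: "nat \<Rightarrow> 'a list"
  link  :: "src \<Rightarrow> tgt"         \<comment> \<open>the wires: start contact \<mapsto> end contact\<close>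

definition srcs :: "'a picture \<Rightarrow> src set" where
  "srcs P = {FTop i | i. i < length (ptop P)} \<union>
            {TBot t j | t j. t \<in> trs P \<and> j < length (trbot P t)}"

definition tgts :: "'a picture \<Rightarrow> tgt set" where
  "tgts P = {TTop t j | t j. t \<in> trs P \<and> j < length (trtop P t)} \<union>
            {FBot i | i. i < length (pbot P)}"

fun slab :: "'a picture \<Rightarrow> src \<Rightarrow> 'a" where
  "slab P (FTop i) = ptop P ! i"
| "slab P (TBot t j) = trbot P t ! j"

fun tlab :: "'a picture \<Rightarrow> tgt \<Rightarrow> 'a" where
  "tlab P (TTop t j) = trtop P t ! j"
| "tlab P (FBot i) = pbot P ! i"

text \<open>Planarity with left-to-right ordered contacts and acyclicity: the picture can be
swept from top to bottom, applying the transistors one at a time, each one consuming a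
contiguous block of the current cut of wires (exactly its top wires, in order) and
replacing it by its bottom wires (in order).\<close>
fun runs :: "'a picture \<Rightarrow> nat list \<Rightarrow> src list \<Rightarrow> src list \<Rightarrow> bool" where
  "runs P [] c c' \<longleftrightarrow> c' = c"
| "runs P (t # ts) c c' \<longleftrightarrow>
     (\<exists>xs ys zs. c = xs @ ys @ zs \<and>
        map (link P) ys = map (TTop t) [0..<length (trtop P t)] \<and>
        runs P ts (xs @ map (TBot t) [0..<length (trbot P t)] @ zs) c')"

definition planar_realizable :: "'a picture \<Rightarrow> bool" where
  "planar_realizable P \<longleftrightarrow>
     (\<exists>ord c'. distinct ord \<and> set ord = trs P \<and>
        runs P ord (map FTop [0..<length (ptop P)]) c' \<and>
        map (link P) c' = map FBot [0..<length (pbot P)])"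

definition wf_picture :: "('a list \<times> 'a list) set \<Rightarrow> 'a picture \<Rightarrow> bool" where
  "wf_picture R P \<longleftrightarrow>
     finite (trs P) \<and>
     (\<forall>t\<in>trs P. (trtop P t, trbot P t) \<in> R \<or> (trbot P t, trtop P t) \<in> R) \<and>
     bij_betw (link P) (srcs P) (tgts P) \<and>
     (\<forall>s\<in>srcs P. tlab P (link P s) = slab P s) \<and>
     planar_realizable P"

text \<open>T1 < T2 if a wire runs from the bottom of T1 to the top of T2; the strict
partial order is its transitive closure.\<close>
definition prec :: "'a picture \<Rightarrow> (nat \<times> nat) set" where
  "prec P = {(t1, t2). t1 \<in> trs P \<and> t2 \<in> trs P \<and>
              (\<exists>j j'. j < length (trbot P t1) \<and> link P (TBot t1 j) = TTop t2 j')}"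

definition maximal_tr :: "'a picture \<Rightarrow> nat \<Rightarrow> bool" where
  "maximal_tr P T \<longleftrightarrow> T \<in> trs P \<and> \<not> (\<exists>T'. (T, T') \<in> (prec P)\<^sup>+)"

definition dipole :: "'a picture \<Rightarrow> nat \<Rightarrow> nat \<Rightarrow> bool" where
  "dipole P T1 T2 \<longleftrightarrow> T1 \<in> trs P \<and> T2 \<in> trs P \<and> (T1, T2) \<in> (prec P)\<^sup>+ \<and>
     length (trbot P T1) = length (trtop P T2) \<and>
     (\<forall>j < length (trbot P T1). link P (TBot T1 j) = TTop T2 j) \<and>
     trtop P T1 = trbot P T2"

definition reduced :: "'a picture \<Rightarrow> bool" where
  "reduced P \<longleftrightarrow> \<not> (\<exists>T1 T2. dipole P T1 T2)"

text \<open>A cube: a reduced (w,*)-picture together with a set W of maximal transistors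
marked white (the others are shaded). Its dimension is card W.\<close>
definition is_cube :: "('a list \<times> 'a list) set \<Rightarrow> 'a list \<Rightarrow> 'a picture \<Rightarrow> nat set \<Rightarrow> bool" where
  "is_cube R w P W \<longleftrightarrow> wf_picture R P \<and> reduced P \<and> ptop P = w \<and>
     W \<subseteq> trs P \<and> (\<forall>T\<in>W. maximal_tr P T)"

text \<open>Deleting a maximal transistor T together with its bottom wires: the bottom wires
of T end at consecutive bottom-frame contacts a, ..., a + |bottom T| - 1; after deletion
the top wires of T end at the bottom frame in their place.\<close>
definition del_tr :: "'a picture \<Rightarrow> nat \<Rightarrow> 'a picture" where
  "del_tr P T =
    (let a = (case link P (TBot T 0) of FBot i \<Rightarrow> i | TTop _ _ \<Rightarrow> 0);
         lb = length (trbot P T); lt = length (trtop P T)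
     in P\<lparr> pbot := take a (pbot P) @ trtop P T @ drop (a + lb) (pbot P),
           trs := trs P - {T},
           link := (\<lambda>s. case link P s of
                      TTop t j \<Rightarrow> (if t = T then FBot (a + j) else TTop t j)
                    | FBot i \<Rightarrow> (if i < a then FBot i else FBot (i + lt - lb))) \<rparr>)"

fun map_src :: "(nat \<Rightarrow> nat) \<Rightarrow> src \<Rightarrow> src" where
  "map_src f (FTop i) = FTop i"
| "map_src f (TBot t j) = TBot (f t) j"

fun map_tgt :: "(nat \<Rightarrow> nat) \<Rightarrow> tgt \<Rightarrow> tgt" where
  "map_tgt f (TTop t j) = TTop (f t) j"
| "map_tgt f (FBot i) = FBot i"

text \<open>Equality of labelled cubes: isomorphism of marked pictures (renaming transistors,
preserving labels, frame, wiring and the set of white transistors).\<close>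
definition marked_iso :: "'a picture \<times> nat set \<Rightarrow> 'a picture \<times> nat set \<Rightarrow> bool" where
  "marked_iso PW QV \<longleftrightarrow>
     (case (PW, QV) of ((P, W), (Q, V)) \<Rightarrow>
       (\<exists>f. bij_betw f (trs P) (trs Q) \<and> f ` W = V \<and>
            ptop P = ptop Q \<and> pbot P = pbot Q \<and>
            (\<forall>t\<in>trs P. trtop Q (f t) = trtop P t \<and> trbot Q (f t) = trbot P t) \<and>
            (\<forall>s\<in>srcs P. link Q (map_src f s) = map_tgt f (link P s))))"

text \<open>Two edges are simple square equivalent if they are opposite sides of a square
(Q, {T1, T2}): the side with T2 kept (shaded) and the side with T2 deleted.\<close>
definition simple_square_equiv ::
  "('a list \<times> 'a list) set \<Rightarrow> 'a list \<Rightarrow> 'a picture \<times> nat set \<Rightarrow> 'a picture \<times> nat set \<Rightarrow> bool" where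
  "simple_square_equiv R w E1 E2 \<longleftrightarrow>
     (\<exists>Q T1 T2. T1 \<noteq> T2 \<and> is_cube R w Q {T1, T2} \<and>
        ((marked_iso E1 (Q, {T1}) \<and> marked_iso E2 (del_tr Q T2, {T1})) \<or>
         (marked_iso E1 (del_tr Q T2, {T1}) \<and> marked_iso E2 (Q, {T1}))))"

end

theory Submission
  imports Defs
begin

lemma mi_unfold:
  "marked_iso (P, W) (Q, V) \<longleftrightarrow>
    (\<exists>f. bij_betw f (trs P) (trs Q) \<and> f ` W = V \<and>
            ptop P = ptop Q \<and> pbot P = pbot Q \<and>
            (\<forall>t\<in>trs P. trtop Q (f t) = trtop P t \<and> trbot Q (f t) = trbot P t) \<and>
            (\<forall>s\<in>srcs P. link Q (map_src f s) = map_tgt f (link P s)))"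
  by (simp add: marked_iso_def)

definition closedp :: "'a picture \<Rightarrow> bool" where
  "closedp P \<longleftrightarrow> (\<forall>s\<in>srcs P. \<forall>t j. link P s = TTop t j \<longrightarrow> t \<in> trs P)"

lemma wf_closed:
  assumes "wf_picture R P" shows "closedp P"
  unfolding closedp_def
proof (intro ballI allI impI)
  fix s t j assume s: "s \<in> srcs P" and l: "link P s = TTop t j"
  have "bij_betw (link P) (srcs P) (tgts P)" using assms unfolding wf_picture_def by blast
  then have "link P s \<in> tgts P" using s bij_betwE by blast
  then show "t \<in> trs P" using l unfolding tgts_def by simp
qed

lemma srcs_mem: "s \<in> srcs P \<longleftrightarrow> (\<exists>i. s = FTop i \<and> i < length (ptop P)) \<or>
   (\<exists>t j. s = TBot t j \<and> t \<in> trs P \<and> j < length (trbot P t))"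
  unfolding srcs_def by blast

lemma map_src_mem:
  assumes "bij_betw f (trs P) (trs Q)" "ptop P = ptop Q"
    "\<forall>t\<in>trs P. trbot Q (f t) = trbot P t" "s \<in> srcs P"
  shows "map_src f s \<in> srcs Q"
  using assms unfolding srcs_mem bij_betw_def by auto

lemma map_src_comp: "map_src (g \<circ> f) s = map_src g (map_src f s)"
  by (cases s) auto
lemma map_tgt_comp: "map_tgt (g \<circ> f) s = map_tgt g (map_tgt f s)"
  by (cases s) auto
lemma map_src_id: "map_src id s = s" by (cases s) auto
lemma map_tgt_id: "map_tgt id s = s" by (cases s) auto

lemma mi_refl: "marked_iso (P, W) (P, W)"
  unfolding mi_unfold
  by (rule exI[of _ id]) (simp add: map_src_id map_tgt_id)

lemma mi_trans:
  assumes "marked_iso (A, W) (B, V)" "marked_iso (B, V) (C, U)"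
  shows "marked_iso (A, W) (C, U)"
proof -
  obtain f where f: "bij_betw f (trs A) (trs B)" "f ` W = V" "ptop A = ptop B" "pbot A = pbot B"
     "\<forall>t\<in>trs A. trtop B (f t) = trtop A t \<and> trbot B (f t) = trbot A t"
     "\<forall>s\<in>srcs A. link B (map_src f s) = map_tgt f (link A s)"
    using assms(1) unfolding mi_unfold by blast
  obtain g where g: "bij_betw g (trs B) (trs C)" "g ` V = U" "ptop B = ptop C" "pbot B = pbot C"
     "\<forall>t\<in>trs B. trtop C (g t) = trtop B t \<and> trbot C (g t) = trbot B t"
     "\<forall>s\<in>srcs B. link C (map_src g s) = map_tgt g (link B s)"
    using assms(2) unfolding mi_unfold by blast
  show ?thesis unfolding mi_unfold
  proof (intro exI[of _ "g \<circ> f"] conjI ballI)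
    show "bij_betw (g \<circ> f) (trs A) (trs C)" using f(1) g(1) by (rule bij_betw_trans)
    show "(g \<circ> f) ` W = U" using f(2) g(2) by (metis image_comp)
    show "ptop A = ptop C" using f g by simp
    show "pbot A = pbot C" using f g by simp
    fix t assume t: "t \<in> trs A"
    then have "f t \<in> trs B" using f(1) bij_betwE by blast
    then show "trtop C ((g \<circ> f) t) = trtop A t" "trbot C ((g \<circ> f) t) = trbot A t"
      using f(5) g(5) t by auto
  next
    fix s assume s: "s \<in> srcs A"
    have "map_src f s \<in> srcs B" using map_src_mem[OF f(1) f(3)] f(5) s by blast
    then show "link C (map_src (g \<circ> f) s) = map_tgt (g \<circ> f) (link A s)"
      using g(6) f(6) s by (simp add: map_src_comp map_tgt_comp)
  qed
qed

lemma mi_sym: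
  assumes "marked_iso (P, W) (Q, V)" "closedp P" "W \<subseteq> trs P"
  shows "marked_iso (Q, V) (P, W)"
proof -
  obtain f where f: "bij_betw f (trs P) (trs Q)" "f ` W = V" "ptop P = ptop Q" "pbot P = pbot Q"
     "\<forall>t\<in>trs P. trtop Q (f t) = trtop P t \<and> trbot Q (f t) = trbot P t"
     "\<forall>s\<in>srcs P. link Q (map_src f s) = map_tgt f (link P s)"
    using assms(1) unfolding mi_unfold by blast
  define g where "g = inv_into (trs P) f"
  have gb: "bij_betw g (trs Q) (trs P)" unfolding g_def using f(1) by (rule bij_betw_inv_into)
  have fg: "\<And>t. t \<in> trs Q \<Longrightarrow> f (g t) = t" unfolding g_def using f(1)
    by (meson bij_betw_inv_into_right)
  have gf: "\<And>t. t \<in> trs P \<Longrightarrow> g (f t) = t" unfolding g_def using f(1)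
    by (meson bij_betw_inv_into_left)
  have gT: "\<And>t. t \<in> trs Q \<Longrightarrow> g t \<in> trs P" using gb bij_betwE by blast
  show ?thesis unfolding mi_unfold
  proof (intro exI[of _ g] conjI ballI)
    show "bij_betw g (trs Q) (trs P)" by (rule gb)
    show "g ` V = W" using f(2) assms(3) gf by force
    show "ptop Q = ptop P" "pbot Q = pbot P" using f by auto
    fix t assume t: "t \<in> trs Q"
    show "trtop P (g t) = trtop Q t" "trbot P (g t) = trbot Q t"
      using f(5) gT[OF t] fg[OF t] by metis+
  next
    fix s assume s: "s \<in> srcs Q"
    have s': "map_src g s \<in> srcs P"
      using s gT f(3) f(5) fg unfolding srcs_mem by force
    have fs: "map_src f (map_src g s) = s"
      using s fg unfolding srcs_mem by auto
    have "map_tgt g (map_tgt f (link P (map_src g s))) = link P (map_src g s)"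
      using assms(2) s' gf unfolding closedp_def by (cases "link P (map_src g s)") auto
    then show "link P (map_src g s) = map_tgt g (link Q s)"
      using f(6) s' fs by metis
  qed
qed

lemma prec_map:
  assumes "marked_iso (P, W) (Q, V)"
  obtains f where "bij_betw f (trs P) (trs Q)" "f ` W = V"
    "\<And>a b. (a, b) \<in> prec P \<Longrightarrow> (f a, f b) \<in> prec Q"
    "\<forall>t\<in>trs P. trtop Q (f t) = trtop P t \<and> trbot Q (f t) = trbot P t"
    "\<forall>s\<in>srcs P. link Q (map_src f s) = map_tgt f (link P s)"
    "ptop P = ptop Q" "pbot P = pbot Q"
proof -
  obtain f where f: "bij_betw f (trs P) (trs Q)" "f ` W = V" "ptop P = ptop Q" "pbot P = pbot Q"
     "\<forall>t\<in>trs P. trtop Q (f t) = trtop P t \<and> trbot Q (f t) = trbot P t"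
     "\<forall>s\<in>srcs P. link Q (map_src f s) = map_tgt f (link P s)"
    using assms(1) unfolding mi_unfold by blast
  have "(f a, f b) \<in> prec Q" if ab: "(a, b) \<in> prec P" for a b
  proof -
    obtain j j' where "a \<in> trs P" "b \<in> trs P" "j < length (trbot P a)" "link P (TBot a j) = TTop b j'"
      using ab unfolding prec_def by blast
    moreover have "TBot a j \<in> srcs P" using calculation unfolding srcs_def by blast
    ultimately show ?thesis using f unfolding prec_def bij_betw_def by force
  qed
  then show ?thesis using that f by blast
qed

lemma trancl_map_fun:
  assumes "(x, y) \<in> r\<^sup>+" "\<And>a b. (a, b) \<in> r \<Longrightarrow> (h a, h b) \<in> s"
  shows "(h x, h y) \<in> s\<^sup>+"
  using assms(1)
proof (induction rule: trancl_induct)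
  case (base y) then show ?case using assms(2) by blast
next
  case (step y z) then show ?case using assms(2) by (meson trancl.trancl_into_trancl)
qed

lemma max_pull:
  assumes "bij_betw f (trs P) (trs Q)" "\<And>a b. (a, b) \<in> prec P \<Longrightarrow> (f a, f b) \<in> prec Q"
    "T \<in> trs P" "maximal_tr Q (f T)"
  shows "maximal_tr P T"
  using assms trancl_map_fun[of T _ "prec P" f "prec Q"] unfolding maximal_tr_def by blast

lemma srcs_del: "srcs (del_tr P T) = srcs P - {TBot T j | j. True}"
  unfolding srcs_def del_tr_def Let_def by auto

lemma trs_del: "trs (del_tr P T) = trs P - {T}"
  unfolding del_tr_def Let_def by simp

lemma closed_del: "closedp P \<Longrightarrow> closedp (del_tr P T)"
  unfolding closedp_def srcs_del trs_del
  by (auto simp: del_tr_def Let_def split: tgt.splits if_splits)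

lemma del_commute:
  assumes "marked_iso (P, W) (Q, V)" "closedp P"
  obtains f where "\<And>T. T \<in> trs P \<Longrightarrow> trbot P T \<noteq> [] \<Longrightarrow> marked_iso (del_tr P T, W) (del_tr Q (f T), V)"
    "bij_betw f (trs P) (trs Q)" "\<And>a b. (a, b) \<in> prec P \<Longrightarrow> (f a, f b) \<in> prec Q" "f ` W = V"
proof -
  obtain f where f: "bij_betw f (trs P) (trs Q)" "f ` W = V"
    "\<And>a b. (a, b) \<in> prec P \<Longrightarrow> (f a, f b) \<in> prec Q"
    "\<forall>t\<in>trs P. trtop Q (f t) = trtop P t \<and> trbot Q (f t) = trbot P t"
    "\<forall>s\<in>srcs P. link Q (map_src f s) = map_tgt f (link P s)"
    "ptop P = ptop Q" "pbot P = pbot Q"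
    using prec_map[OF assms(1)] by blast
  have inj: "inj_on f (trs P)" using f(1) bij_betw_def by blast
  have main: "marked_iso (del_tr P T, W) (del_tr Q (f T), V)" if TT: "T \<in> trs P" "trbot P T \<noteq> []" for T
  proof -
  have T0: "TBot T 0 \<in> srcs P" using TT unfolding srcs_def by auto
  have l0: "link Q (TBot (f T) 0) = map_tgt f (link P (TBot T 0))"
    using f(5) T0 by force
  define a where "a = (case link P (TBot T 0) of FBot i \<Rightarrow> i | TTop _ _ \<Rightarrow> 0)"
  have aQ: "(case link Q (TBot (f T) 0) of FBot i \<Rightarrow> i | TTop _ _ \<Rightarrow> 0) = a"
    unfolding l0 a_def by (cases "link P (TBot T 0)") auto
  have lt: "trtop Q (f T) = trtop P T" and lb: "trbot Q (f T) = trbot P T" using f(4) TT by auto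
  show "marked_iso (del_tr P T, W) (del_tr Q (f T), V)"
    unfolding mi_unfold
  proof (intro exI[of _ f] conjI ballI)
    have "f ` (trs P - {T}) = trs Q - {f T}"
      using f(1) TT unfolding bij_betw_def inj_on_def by auto
    then show "bij_betw f (trs (del_tr P T)) (trs (del_tr Q (f T)))"
      unfolding trs_del using inj by (simp add: bij_betw_def inj_on_diff)
    show "f ` W = V" by (rule f(2))
    show "ptop (del_tr P T) = ptop (del_tr Q (f T))" using f(6) by (simp add: del_tr_def Let_def)
    show "pbot (del_tr P T) = pbot (del_tr Q (f T))"
      using f(7) lt lb aQ by (simp add: del_tr_def Let_def a_def)
    fix t assume "t \<in> trs (del_tr P T)"
    then show "trtop (del_tr Q (f T)) (f t) = trtop (del_tr P T) t"
        "trbot (del_tr Q (f T)) (f t) = trbot (del_tr P T) t"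
      using f(4) by (auto simp: del_tr_def Let_def)
  next
    fix s assume s: "s \<in> srcs (del_tr P T)"
    then have sP: "s \<in> srcs P" unfolding srcs_del by blast
    have lQ: "link Q (map_src f s) = map_tgt f (link P s)" using f(5) sP by blast
    have cl: "\<And>t j. link P s = TTop t j \<Longrightarrow> t \<in> trs P" using assms(2) sP unfolding closedp_def by blast
    show "link (del_tr Q (f T)) (map_src f s) = map_tgt f (link (del_tr P T) s)"
    proof (cases "link P s")
      case (TTop t j)
      then have "t \<in> trs P" using cl by blast
      then have "(f t = f T) = (t = T)" using inj TT unfolding inj_on_def by blast
      then show ?thesis using TTop lQ aQ lt lb
        by (simp add: del_tr_def Let_def a_def)
    next
      case (FBot i)
      then show ?thesis using lQ aQ lt lb
        by (simp add: del_tr_def Let_def a_def)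
    qed
  qed
  qed
  then show ?thesis using that f by blast
qed

lemma trbot_ne:
  assumes "semigroup_presentation R" "wf_picture R P" "T \<in> trs P"
  shows "trbot P T \<noteq> []"
  using assms unfolding semigroup_presentation_def wf_picture_def by fastforce

lemma fwd:
  assumes R: "semigroup_presentation R"
    and P: "is_cube R w P {t}" and Pb: "is_cube R w Pb {tb}"
    and Q: "is_cube R w Q {T1, T2}" and ne: "T1 \<noteq> T2"
    and i1: "marked_iso (P, {t}) (Q, {T1})"
    and i2: "marked_iso (Pb, {tb}) (del_tr Q T2, {T1})"
  shows "\<exists>T. maximal_tr P T \<and> T \<noteq> t \<and> marked_iso (del_tr P T, {t}) (Pb, {tb})"
proof -
  have wfP: "wf_picture R P" using P unfolding is_cube_def by blast
  have clP: "closedp P" by (rule wf_closed[OF wfP])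
  have tP: "t \<in> trs P" using P unfolding is_cube_def by blast
  obtain f where f: "\<And>T. T \<in> trs P \<Longrightarrow> trbot P T \<noteq> [] \<Longrightarrow> marked_iso (del_tr P T, {t}) (del_tr Q (f T), {T1})"
    "bij_betw f (trs P) (trs Q)" "\<And>a b. (a, b) \<in> prec P \<Longrightarrow> (f a, f b) \<in> prec Q" "f ` {t} = {T1}"
    using del_commute[OF i1 clP] by blast
  have T2Q: "T2 \<in> trs Q" "maximal_tr Q T2" using Q unfolding is_cube_def by auto
  define T where "T = inv_into (trs P) f T2"
  have TP: "T \<in> trs P" unfolding T_def using f(2) T2Q(1)
    by (metis bij_betwE bij_betw_inv_into)
  have fT: "f T = T2" unfolding T_def using f(2) T2Q(1) by (meson bij_betw_inv_into_right)
  have tT: "T \<noteq> t" using f(4) fT ne by auto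
  have m1: "marked_iso (del_tr P T, {t}) (del_tr Q T2, {T1})"
    using f(1)[OF TP trbot_ne[OF R wfP TP]] fT by simp
  have wfPb: "wf_picture R Pb" using Pb unfolding is_cube_def by blast
  have tbP: "{tb} \<subseteq> trs Pb" using Pb unfolding is_cube_def by blast
  have m2: "marked_iso (del_tr Q T2, {T1}) (Pb, {tb})"
    by (rule mi_sym[OF i2 wf_closed[OF wfPb] tbP])
  have "maximal_tr P T" using max_pull[OF f(2) f(3) TP] fT T2Q(2) by simp
  then show ?thesis using tT mi_trans[OF m1 m2] by blast
qed

theorem lemma4p1:
  fixes R :: "('a list \<times> 'a list) set" and w :: "'a list"
    and P1 P2 :: "'a picture" and t1 t2 :: nat
  assumes "semigroup_presentation R" and "w \<noteq> []"
    and "is_cube R w P1 {t1}" and "is_cube R w P2 {t2}"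
  shows "simple_square_equiv R w (P1, {t1}) (P2, {t2}) \<longleftrightarrow>
           (\<exists>T. maximal_tr P1 T \<and> T \<noteq> t1 \<and> marked_iso (del_tr P1 T, {t1}) (P2, {t2})) \<or>
           (\<exists>T. maximal_tr P2 T \<and> T \<noteq> t2 \<and> marked_iso (del_tr P2 T, {t2}) (P1, {t1}))"
    (is "_ \<longleftrightarrow> ?R")
proof
  assume "simple_square_equiv R w (P1, {t1}) (P2, {t2})"
  then obtain Q T1 T2 where q: "T1 \<noteq> T2" "is_cube R w Q {T1, T2}"
    "(marked_iso (P1, {t1}) (Q, {T1}) \<and> marked_iso (P2, {t2}) (del_tr Q T2, {T1})) \<or>
     (marked_iso (P1, {t1}) (del_tr Q T2, {T1}) \<and> marked_iso (P2, {t2}) (Q, {T1}))"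
    unfolding simple_square_equiv_def by blast
  from q(3) show "?R"
  proof
    assume "marked_iso (P1, {t1}) (Q, {T1}) \<and> marked_iso (P2, {t2}) (del_tr Q T2, {T1})"
    then show ?thesis using fwd[OF assms(1) assms(3) assms(4) q(2) q(1)] by (intro disjI1) blast
  next
    assume "marked_iso (P1, {t1}) (del_tr Q T2, {T1}) \<and> marked_iso (P2, {t2}) (Q, {T1})"
    then show ?thesis using fwd[OF assms(1) assms(4) assms(3) q(2) q(1)] by (intro disjI2) blast
  qed
next
  have c1: "wf_picture R P1" "reduced P1" "ptop P1 = w" "t1 \<in> trs P1" "maximal_tr P1 t1"
    using assms(3) unfolding is_cube_def by simp_all
  have c2: "wf_picture R P2" "reduced P2" "ptop P2 = w" "t2 \<in> trs P2" "maximal_tr P2 t2"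
    using assms(4) unfolding is_cube_def by simp_all
  assume "?R"
  then show "simple_square_equiv R w (P1, {t1}) (P2, {t2})"
  proof
    assume "\<exists>T. maximal_tr P1 T \<and> T \<noteq> t1 \<and> marked_iso (del_tr P1 T, {t1}) (P2, {t2})"
    then obtain T where T: "maximal_tr P1 T" "T \<noteq> t1" "marked_iso (del_tr P1 T, {t1}) (P2, {t2})" by blast
    have TinP: "T \<in> trs P1" using T(1) unfolding maximal_tr_def by blast
    have cube: "is_cube R w P1 {t1, T}" unfolding is_cube_def using c1 TinP T(1) by simp
    have "{t1} \<subseteq> trs (del_tr P1 T)" using c1(4) T(2) by (simp add: trs_del)
    then have "marked_iso (P2, {t2}) (del_tr P1 T, {t1})"
      using mi_sym[OF T(3) closed_del[OF wf_closed[OF c1(1)]]] by blast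
    note m = this
    show ?thesis unfolding simple_square_equiv_def
      apply (rule exI[of _ P1], rule exI[of _ t1], rule exI[of _ T], intro conjI disjI1)
      using T(2) apply blast
      apply (rule cube)
      apply (rule mi_refl)
      apply (rule m)
      done
  next
    assume "\<exists>T. maximal_tr P2 T \<and> T \<noteq> t2 \<and> marked_iso (del_tr P2 T, {t2}) (P1, {t1})"
    then obtain T where T: "maximal_tr P2 T" "T \<noteq> t2" "marked_iso (del_tr P2 T, {t2}) (P1, {t1})" by blast
    have TinP: "T \<in> trs P2" using T(1) unfolding maximal_tr_def by blast
    have cube: "is_cube R w P2 {t2, T}" unfolding is_cube_def using c2 TinP T(1) by simp
    have "{t2} \<subseteq> trs (del_tr P2 T)" using c2(4) T(2) by (simp add: trs_del)
    then have "marked_iso (P1, {t1}) (del_tr P2 T, {t2})"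
      using mi_sym[OF T(3) closed_del[OF wf_closed[OF c2(1)]]] by blast
    note m = this
    show ?thesis unfolding simple_square_equiv_def
      apply (rule exI[of _ P2], rule exI[of _ t2], rule exI[of _ T], intro conjI disjI2)
      using T(2) apply blast
      apply (rule cube)
      apply (rule m)
      apply (rule mi_refl)
      done
  qed
qed

end
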